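(* Let $m\ge1$, $q=2^m$, $n=3$, let $a,b,c\in\mathbb F_{q^3}$, let $k$ be an integer with $0\le k<m$, and let $L(x)=\big(ax+bx^q+cx^{q^2}\big)^{2^k}$. Let $s=\gcd(k-1,m)$. Then $\mathrm{Tr}(x^{q+1})+L(x)$ is a permutation polynomial of $\mathbb F_{q^3}$ if and only if $(a+b+c)^{\frac{q-1}{2^s-1}}\ne1$ and either (a) $a+b+c\in\mathbb F_q^*$ and $a^{q^2+q+1}+b^{q^2+q+1}+c^{q^2+q+1}+\mathrm{Tr}\big(ab^qc^{q^2}\big)\ne0$, or (b) $a+b+c=0$ and $\mathrm{Tr}(a^{q+1}+a^qb+b^{q+1})\ne0$.
   Context: $\mathrm{Tr}(x)=x+x^q+x^{q^2}$ is the trace map of $\mathbb F_{q^3}$ over $\mathbb F_q$. Polynomials are regarded as maps on $\mathbb F_{q^3}$; a permutation polynomial is one inducing a bijection. *)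

theory Defs
  imports Main
begin

definition Tr3 :: "nat \<Rightarrow> 'a::field \<Rightarrow> 'a" where
  "Tr3 q x = x + x ^ q + x ^ (q ^ 2)"

definition is_perm :: "('a \<Rightarrow> 'a) \<Rightarrow> bool" where
  "is_perm f \<longleftrightarrow> bij f"

end

theory Submission
  imports Defs "HOL-Computational_Algebra.Polynomial"
begin


lemma fermat_ff:
  fixes x :: "'a::{field,finite}"
  assumes "x \<noteq> 0"
  shows "x ^ (card (UNIV::'a set) - 1) = 1"
proof -
  let ?S = "UNIV - {0::'a}"
  have bij: "bij_betw (\<lambda>y. x * y) ?S ?S"
    using assms by (auto simp: bij_betw_def inj_on_def intro!: image_eqI[where x="y / x" for y])
  have "prod (\<lambda>y. y) ?S = prod (\<lambda>y. x * y) ?S"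
    using prod.reindex_bij_betw[OF bij, of "\<lambda>y. y"] by simp
  also have "\<dots> = x ^ card ?S * prod (\<lambda>y. y) ?S"
    by (simp add: prod.distrib)
  finally have "x ^ card ?S = 1"
    by (simp add: prod_zero_iff)
  moreover have "card ?S = card (UNIV::'a set) - 1"
    by (simp add: card_Diff_singleton)
  ultimately show ?thesis by simp
qed

lemma fermat_ff2:
  fixes x :: "'a::{field,finite}"
  shows "x ^ card (UNIV::'a set) = x"
proof (cases "x = 0")
  case True
  have "card (UNIV::'a set) > 0" by (simp add: finite_UNIV_card_ge_0)
  then show ?thesis using True by (simp add: zero_power)
next
  case False
  have "card (UNIV::'a set) > 0" by (simp add: finite_UNIV_card_ge_0)
  then have "x ^ card (UNIV::'a set) = x * x ^ (card (UNIV::'a set) - 1)"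
    by (metis Suc_diff_1 power_Suc)
  then show ?thesis using fermat_ff[OF False] by simp
qed

lemma roots_bound:
  fixes p :: "'a::field poly"
  assumes "p \<noteq> 0" "degree p \<le> D" "\<And>x. x \<in> S \<Longrightarrow> poly p x = 0"
  shows "card S \<le> D"
proof -
  have "S \<subseteq> {x. poly p x = 0}" using assms(3) by auto
  then have "card S \<le> card {x. poly p x = 0}"
    by (intro card_mono poly_roots_finite assms(1))
  also have "\<dots> \<le> degree p" by (rule card_poly_roots_bound[OF assms(1)])
  finally show ?thesis using assms(2) by simp
qed

lemma card_fibers:
  assumes "finite S" "\<And>v. v \<in> h ` S \<Longrightarrow> card {x\<in>S. h x = v} = K"
  shows "card S = card (h ` S) * K"
proof -
  have "S = (\<Union>v\<in>h ` S. {x\<in>S. h x = v})" by auto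
  then have "card S = card (\<Union>v\<in>h ` S. {x\<in>S. h x = v})" by simp
  also have "\<dots> = (\<Sum>v\<in>h ` S. card {x\<in>S. h x = v})"
    using assms(1) by (intro card_UN_disjoint) auto
  also have "\<dots> = (\<Sum>v\<in>h ` S. K)" using assms(2) by simp
  finally show ?thesis by simp
qed

lemma gcd_pow2_minus1:
  "gcd (2 ^ a - 1) (2 ^ b - 1) = (2::nat) ^ gcd a b - 1"
proof (induction "a + b" arbitrary: a b rule: less_induct)
  case less
  consider "a = 0" | "b = 0" | "0 < b" "b \<le> a" | "0 < a" "a < b" by linarith
  then show ?case
  proof cases
    case 1 then show ?thesis by simp
  next
    case 2 then show ?thesis by simp
  next
    case 3
    have e: "(2::nat) ^ a - 1 = 2 ^ (a - b) * (2 ^ b - 1) + (2 ^ (a - b) - 1)"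
    proof -
      have p: "(2::nat) ^ a = 2 ^ (a - b) * 2 ^ b" using 3 by (simp add: power_add[symmetric])
      have "(1::nat) \<le> 2 ^ (a - b)" by simp
      moreover have "(1::nat) \<le> 2 ^ b" by simp
      ultimately show ?thesis unfolding p by (simp add: algebra_simps diff_mult_distrib2)
    qed
    have "gcd (2 ^ a - 1) (2 ^ b - 1) = gcd (2 ^ (a - b) - 1) ((2::nat) ^ b - 1)"
      unfolding e by (metis gcd.commute gcd_add_mult mult.commute)
    also have "\<dots> = 2 ^ gcd (a - b) b - 1" using less 3 by simp
    also have "gcd (a - b) b = gcd a b" using 3 by (simp add: gcd_diff1_nat)
    finally show ?thesis .
  next
    case 4
    have "gcd (2 ^ b - 1) ((2::nat) ^ a - 1) = 2 ^ gcd b a - 1"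
    proof -
      have e: "(2::nat) ^ b - 1 = 2 ^ (b - a) * (2 ^ a - 1) + (2 ^ (b - a) - 1)"
      proof -
        have p: "(2::nat) ^ b = 2 ^ (b - a) * 2 ^ a" using 4 by (simp add: power_add[symmetric])
        have "(1::nat) \<le> 2 ^ (b - a)" by simp
        moreover have "(1::nat) \<le> 2 ^ a" by simp
        ultimately show ?thesis unfolding p by (simp add: algebra_simps diff_mult_distrib2)
      qed
      have "gcd (2 ^ b - 1) (2 ^ a - 1) = gcd (2 ^ (b - a) - 1) ((2::nat) ^ a - 1)"
        unfolding e by (metis gcd.commute gcd_add_mult mult.commute)
      also have "\<dots> = 2 ^ gcd (b - a) a - 1" using less 4 by simp
      also have "gcd (b - a) a = gcd b a" using 4 by (simp add: gcd_diff1_nat)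
      finally show ?thesis .
    qed
    then show ?thesis by (simp add: gcd.commute)
  qed
qed

definition frob :: "nat \<Rightarrow> 'a::field \<Rightarrow> 'a" where "frob n x = x ^ n"

locale ff =
  fixes q m :: nat and fr :: "'a::{field,finite} \<Rightarrow> 'a"
  assumes card: "card (UNIV::'a set) = q ^ 3" and qm: "q = 2 ^ m" and m1: "1 \<le> m"
    and fr_def: "fr x = x ^ q"
begin

lemma q2: "q \<ge> 2"
proof -
  have "(2::nat) ^ 1 \<le> 2 ^ m" using m1 by (intro power_increasing) auto
  then show ?thesis using qm by simp
qed

lemma card_gt: "q ^ 2 < card (UNIV::'a set)"
  using q2 by (simp add: card power3_eq_cube power2_eq_square)

lemma char2: "(2::'a) = 0"
proof -
  have ev: "even (q ^ 3)" using qm m1 by (simp add: even_power)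
  have "(-1::'a) ^ (q^3) = -1" using fermat_ff2[of "-1::'a"] card by simp
  moreover have "(-1::'a) ^ (q^3) = 1" using ev by simp
  ultimately have "(1::'a) = -1" by simp
  then have "(2::'a) = 1 + -1" by (metis one_add_one)
  then show ?thesis by simp
qed

lemma add_self[simp]: "x + x = (0::'a)"
  by (metis char2 mult_2 mult_zero_left)

lemma neg_eq[simp]: "- x = (x::'a)"
  by (metis add_self add.inverse_unique)

lemma diff_eq_add[simp]: "x - y = x + (y::'a)"
  by simp

lemma add_eq_0_iff: "x + y = 0 \<longleftrightarrow> x = (y::'a)"
  by (metis add_self add_diff_cancel_left' diff_eq_add)

lemma pow2_add: "(x + y) ^ (2 ^ j) = x ^ (2 ^ j) + (y::'a) ^ (2 ^ j)"
proof (induction j)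
  case 0 then show ?case by simp
next
  case (Suc j)
  have "(x + y) ^ (2 ^ Suc j) = ((x + y) ^ (2 ^ j))\<^sup>2"
    by (simp add: power_mult[symmetric] mult.commute)
  also have "\<dots> = (x ^ (2 ^ j))\<^sup>2 + (y ^ (2 ^ j))\<^sup>2 + 2 * x ^ (2 ^ j) * y ^ (2 ^ j)"
    using Suc by (simp add: power2_sum)
  also have "\<dots> = x ^ (2 ^ Suc j) + y ^ (2 ^ Suc j)"
    by (simp add: char2 power_mult[symmetric] mult.commute)
  finally show ?case .
qed

lemma pow2_inj: "x ^ (2 ^ j) = (y::'a) ^ (2 ^ j) \<longleftrightarrow> x = y"
proof
  assume "x ^ (2 ^ j) = y ^ (2 ^ j)"
  then have "(x + y) ^ (2 ^ j) = 0" by (simp add: pow2_add)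
  then show "x = y" by (simp add: add_eq_0_iff)
qed simp

lemma fr_add[simp]: "fr (x + y) = fr x + fr y"
  by (simp add: fr_def qm pow2_add)
lemma fr_mult[simp]: "fr (x * y) = fr x * fr y"
  by (simp add: fr_def power_mult_distrib)
lemma fr_0[simp]: "fr 0 = 0" using q2 by (simp add: fr_def)
lemma fr_1[simp]: "fr 1 = 1" by (simp add: fr_def)
lemma fr3[simp]: "fr (fr (fr x)) = x"
  using fermat_ff2[of x] by (simp add: fr_def card power_mult[symmetric] power3_eq_cube)
lemma fr_inj[simp]: "fr x = fr y \<longleftrightarrow> x = y"
  by (metis fr3)
lemma fr_eq0[simp]: "fr x = 0 \<longleftrightarrow> x = 0"
  by (metis fr_0 fr_inj)
lemma fr_inverse[simp]: "fr (inverse x) = inverse (fr x)"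
  by (simp add: fr_def power_inverse)
lemma fr_pow[simp]: "fr (x ^ n) = fr x ^ n"
  by (simp add: fr_def power_mult[symmetric] mult.commute)
lemma pow_q2: "x ^ (q^2) = fr (fr x)"
  by (simp add: fr_def power2_eq_square power_mult)
lemma pow_q: "x ^ q = fr x" by (simp add: fr_def)
lemma Tr_eq: "Tr3 q x = x + fr x + fr (fr x)"
  by (simp add: Tr3_def pow_q2 pow_q)
lemma fr_Tr[simp]: "fr (Tr3 q x) = Tr3 q x"
  by (simp add: Tr_eq ac_simps)
lemma norm_eq: "x ^ (q^2 + q + 1) = x * fr x * fr (fr x)"
  by (simp add: power_add pow_q2 pow_q ac_simps)


definition Fq :: "'a set" where "Fq = {x. fr x = x}"

lemma Fq_iff: "x \<in> Fq \<longleftrightarrow> fr x = x" by (simp add: Fq_def)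
lemma Fq_0[simp]: "0 \<in> Fq" and Fq_1[simp]: "1 \<in> Fq" by (simp_all add: Fq_iff)
lemma Fq_add: "x \<in> Fq \<Longrightarrow> y \<in> Fq \<Longrightarrow> x + y \<in> Fq" by (simp add: Fq_iff)
lemma Fq_mult: "x \<in> Fq \<Longrightarrow> y \<in> Fq \<Longrightarrow> x * y \<in> Fq" by (simp add: Fq_iff)
lemma Fq_inverse: "x \<in> Fq \<Longrightarrow> inverse x \<in> Fq" by (simp add: Fq_iff)
lemma Fq_pow: "x \<in> Fq \<Longrightarrow> x ^ n \<in> Fq" by (simp add: Fq_iff)
lemma Fq_Tr: "Tr3 q x \<in> Fq" by (simp add: Fq_iff)

lemma add_hom_card:
  fixes h :: "'a \<Rightarrow> 'a"
  assumes add: "\<And>x y. h (x + y) = h x + h y"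
  shows "card (UNIV::'a set) = card (range h) * card {x. h x = 0}"
proof (rule card_fibers[where S=UNIV, simplified])
  fix v assume "v \<in> range h"
  then obtain x0 where v: "v = h x0" by auto
  have "{x. h x = v} = (\<lambda>z. x0 + z) ` {z. h z = 0}"
  proof (rule set_eqI, rule iffI)
    fix x assume "x \<in> {x. h x = v}"
    then have "h (x0 + x) = 0" using v add by simp
    then show "x \<in> (\<lambda>z. x0 + z) ` {z. h z = 0}"
      by (intro image_eqI[where x="x0 + x"]) (simp_all add: add.assoc[symmetric])
  next
    fix x assume "x \<in> (\<lambda>z. x0 + z) ` {z. h z = 0}"
    then show "x \<in> {x. h x = v}" using v add by auto
  qed
  also have "card \<dots> = card {z. h z = 0}" by (intro card_image) (simp add: inj_on_def)
  finally show "card {x. h x = v} = card {x. h x = 0}" .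
qed simp

lemma card_Fq_le: "card Fq \<le> q"
proof (rule roots_bound)
  let ?p = "monom (1::'a) q - [:0, 1:]"
  show "?p \<noteq> 0"
  proof
    assume "?p = 0"
    then have "coeff ?p q = 0" by simp
    then show False using q2 by (simp add: coeff_pCons split: nat.splits)
  qed
  show "degree ?p \<le> q" using q2
    by (intro order.trans[OF degree_diff_le_max]) (auto simp: degree_monom_eq degree_pCons_eq_if)
  fix x assume "x \<in> Fq" then show "poly ?p x = 0" by (simp add: poly_monom Fq_iff fr_def)
qed

lemma card_K0_le: "card {x::'a. Tr3 q x = 0} \<le> q ^ 2"
proof -
  define p where "p = monom (1::'a) (q^2) + monom 1 q + [:0, 1:]"
  have qq: "q ^ 2 \<noteq> q" "q ^ 2 \<noteq> Suc 0" "q \<noteq> Suc 0" "q \<noteq> q^2" using q2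
    by (auto simp: power2_eq_square)
  have "coeff p (q^2) = 1" using qq by (simp add: p_def coeff_pCons coeff_monom split: nat.splits)
  then have p0: "p \<noteq> 0" by (metis coeff_0 one_neq_zero)
  have "q \<le> q ^ 2" using q2 by (simp add: power2_eq_square)
  then have dp: "degree p \<le> q ^ 2" using q2 unfolding p_def
    by (intro order.trans[OF degree_add_le_max] max.boundedI order.trans[OF degree_monom_le])
       (auto simp: degree_pCons_eq_if)
  have "poly p x = 0" if "x \<in> {x. Tr3 q x = 0}" for x
    using that by (simp add: p_def poly_monom Tr3_def ac_simps)
  then show ?thesis by (rule roots_bound[OF p0 dp])
qed

lemma Tr_range: "range (Tr3 q :: 'a \<Rightarrow> 'a) = Fq" and card_Fq: "card Fq = q"
proof -
  have "card (UNIV::'a set) = card (range (Tr3 q :: 'a \<Rightarrow> 'a)) * card {x::'a. Tr3 q x = 0}"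
    by (rule add_hom_card[of "Tr3 q"]) (simp add: Tr_eq ac_simps)
  also have "\<dots> \<le> card (range (Tr3 q :: 'a \<Rightarrow> 'a)) * q ^ 2" using card_K0_le by simp
  finally have "q * q ^ 2 \<le> card (range (Tr3 q :: 'a \<Rightarrow> 'a)) * q ^ 2" by (simp add: card power3_eq_cube power2_eq_square)
  then have ge: "q \<le> card (range (Tr3 q :: 'a \<Rightarrow> 'a))" using q2 by simp
  have sub: "range (Tr3 q :: 'a \<Rightarrow> 'a) \<subseteq> Fq" using Fq_Tr by auto
  then have "card (range (Tr3 q :: 'a \<Rightarrow> 'a)) \<le> card Fq" by (intro card_mono) auto
  with ge card_Fq_le have eq: "card (range (Tr3 q :: 'a \<Rightarrow> 'a)) = card Fq" by simp
  show "range (Tr3 q :: 'a \<Rightarrow> 'a) = Fq" by (rule card_subset_eq[OF _ sub eq]) simp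
  show "card Fq = q" using eq ge card_Fq_le by simp
qed

lemma Tr_mult_surj:
  assumes "w \<noteq> 0" "y \<in> Fq" shows "\<exists>x. Tr3 q (x * w) = y"
proof -
  obtain x where "Tr3 q x = y" using assms(2) Tr_range by (metis rangeE)
  then have "Tr3 q ((x / w) * w) = y" using assms(1) by simp
  then show ?thesis by blast
qed


lemma fr_diff: "fr (x - y) = fr x - fr y" by simp

definition Mf :: "'a \<Rightarrow> 'a \<Rightarrow> 'a \<Rightarrow> 'a \<Rightarrow> 'a" where
  "Mf a b c y = a * y + b * fr y + c * fr (fr y)"

definition DetS :: "'a \<Rightarrow> 'a \<Rightarrow> 'a \<Rightarrow> 'a" where
  "DetS a b c = a * fr a * fr (fr a) + b * fr b * fr (fr b) + c * fr c * fr (fr c)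
     - (a * fr b * fr (fr c) + fr a * fr (fr b) * c + fr (fr a) * b * fr c)"

lemma Mf_add: "Mf a b c (y + z) = Mf a b c y + Mf a b c z"
  by (simp add: Mf_def algebra_simps)

lemma Mf_0[simp]: "Mf a b c 0 = 0" by (simp add: Mf_def)

lemma ker_det1:
  assumes "DetS a b c \<noteq> 0" "Mf a b c y = 0" shows "y = 0"
proof -
  have e0: "a * y + b * fr y + c * fr (fr y) = 0" using assms(2) by (simp add: Mf_def)
  have e1: "fr a * fr y + fr b * fr (fr y) + fr c * y = 0"
    using arg_cong[OF assms(2), of fr] by (simp add: Mf_def)
  have e2: "fr (fr a) * fr (fr y) + fr (fr b) * y + fr (fr c) * fr y = 0"
    using arg_cong[OF arg_cong[OF assms(2), of fr], of fr] by (simp add: Mf_def)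
  have "DetS a b c * y =
     (fr a * fr (fr a) - fr b * fr (fr c)) * (a * y + b * fr y + c * fr (fr y))
   - (b * fr (fr a) - c * fr (fr c)) * (fr a * fr y + fr b * fr (fr y) + fr c * y)
   + (b * fr b - c * fr a) * (fr (fr a) * fr (fr y) + fr (fr b) * y + fr (fr c) * fr y)"
    unfolding DetS_def by algebra
  then have "DetS a b c * y = 0" using e0 e1 e2 by (simp only: mult_zero_right diff_zero add_0_right)
  then show ?thesis using assms(1) by simp
qed

lemma lin_zero:
  assumes "\<And>z. n0 * z + n1 * fr z + n2 * fr (fr z) = 0"
  shows "n0 = 0 \<and> n1 = 0 \<and> n2 = 0"
proof -
  define p where "p = monom n0 1 + monom n1 q + monom n2 (q^2)"
  have qq: "q ^ 2 \<noteq> q" "q ^ 2 \<noteq> Suc 0" "q \<noteq> Suc 0" "q \<noteq> q^2" "Suc 0 \<noteq> q" "Suc 0 \<noteq> q^2" using q2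
    by (auto simp: power2_eq_square)
  have "q \<le> q ^ 2" using q2 by (simp add: power2_eq_square)
  then have dp: "degree p \<le> q ^ 2" using q2 unfolding p_def
    by (intro order.trans[OF degree_add_le_max] max.boundedI order.trans[OF degree_monom_le]) auto
  have roots: "poly p x = 0" if "x \<in> UNIV" for x
    using assms[of x] by (simp add: p_def poly_monom pow_q2 pow_q)
  have "p = 0"
  proof (rule ccontr)
    assume "p \<noteq> 0"
    from roots_bound[where S=UNIV, OF this dp roots] card_gt show False by simp
  qed
  then have "coeff p 1 = 0" "coeff p q = 0" "coeff p (q^2) = 0" by simp_all
  then show ?thesis using qq by (simp add: p_def coeff_monom)
qed

lemma not_surj_rel:
  assumes "\<mu> \<noteq> 0" "\<And>y. \<mu> * fr (M y) = \<nu> * M y"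
  shows "\<not> surj (M :: 'a \<Rightarrow> 'a)"
proof
  assume s: "surj M"
  define p where "p = monom \<mu> q - [:0, \<nu>:]"
  have "coeff p q = \<mu>" using q2 by (simp add: p_def coeff_pCons split: nat.splits)
  then have p0: "p \<noteq> 0" using assms(1) by auto
  have dp: "degree p \<le> q" using q2 unfolding p_def
    by (intro order.trans[OF degree_diff_le_max]) (auto simp: degree_monom_le degree_pCons_eq_if)
  have "poly p x = 0" if "x \<in> UNIV" for x
  proof -
    obtain y where "x = M y" using s by (metis surjD)
    then show ?thesis using assms(2)[of y] by (simp add: p_def poly_monom fr_def char2)
  qed
  from roots_bound[where S=UNIV, OF p0 dp this] have "card (UNIV::'a set) \<le> q" .
  moreover have "q \<le> q ^ 2" using q2 by (simp add: power2_eq_square)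
  ultimately show False using card_gt by linarith
qed

lemma ker_det2:
  assumes "DetS a b c = 0" shows "\<exists>y. y \<noteq> 0 \<and> Mf a b c y = 0"
proof (rule ccontr)
  assume "\<not> ?thesis"
  then have inj0: "\<And>y. Mf a b c y = 0 \<Longrightarrow> y = 0" by blast
  have inj: "inj (Mf a b c)"
  proof (rule injI)
    fix x y assume "Mf a b c x = Mf a b c y"
    then have "Mf a b c (x + y) = 0" by (simp add: Mf_add)
    then show "x = y" using inj0 add_eq_0_iff by blast
  qed
  then have surj: "surj (Mf a b c)" by (simp add: finite_UNIV_inj_surj)
  define n0 where "n0 = fr a * fr (fr a) - fr b * fr (fr c)"
  define n1 where "n1 = c * fr (fr c) - fr (fr a) * b"
  define n2 where "n2 = b * fr b - fr a * c"
  have comp: "Mf a b c (n0 * z + n1 * fr z + n2 * fr (fr z)) = DetS a b c * z" for z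
    unfolding Mf_def DetS_def n0_def n1_def n2_def
    by (simp only: fr_add fr_mult fr_diff fr3) algebra
  have "n0 * z + n1 * fr z + n2 * fr (fr z) = 0" for z
    using comp[of z] assms inj0 by simp
  then have nz: "n0 = 0" "n1 = 0" "n2 = 0" using lin_zero by blast+
  have r1: "a * fr a = b * fr c"
    using arg_cong[OF arg_cong[OF nz(1), of fr], of fr] by (simp add: n0_def add_eq_0_iff)
  have r2: "a * fr b = c * fr c"
    using arg_cong[OF nz(2), of fr] by (simp add: n1_def ac_simps add_eq_0_iff)
  have r3: "b * fr b = fr a * c"
    using nz(3) by (simp add: n2_def add_eq_0_iff)
  consider "a \<noteq> 0" | "a = 0" "b \<noteq> 0" | "a = 0" "b = 0" "c \<noteq> 0" | "a = 0" "b = 0" "c = 0"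
    by blast
  then show False
  proof cases
    case 1
    have "a * fr (Mf a b c y) = fr c * Mf a b c y" for y
      unfolding Mf_def using r1 r2 by (simp only: fr_add fr_mult fr3) algebra
    then show False using not_surj_rel[OF 1] surj by blast
  next
    case 2
    have "b * fr (Mf a b c y) = fr a * Mf a b c y" for y
      unfolding Mf_def using r1 r3 by (simp only: fr_add fr_mult fr3) algebra
    then show False using not_surj_rel[OF 2(2)] surj by blast
  next
    case 3
    have "c * fr (Mf a b c y) = fr b * Mf a b c y" for y
      unfolding Mf_def using r2 r3 by (simp only: fr_add fr_mult fr3) algebra
    then show False using not_surj_rel[OF 3(3)] surj by blast
  next
    case 4
    then show False using inj0[of 1] by (simp add: Mf_def)
  qed
qed

lemma ker_det: "(\<exists>y. y \<noteq> 0 \<and> Mf a b c y = 0) \<longleftrightarrow> DetS a b c = 0"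
  using ker_det1 ker_det2 by blast


lemma Fq_pow2_iff: "z ^ (2 ^ k) \<in> Fq \<longleftrightarrow> z \<in> Fq"
  by (simp add: Fq_iff pow2_inj)

definition Ff :: "'a \<Rightarrow> 'a \<Rightarrow> 'a \<Rightarrow> nat \<Rightarrow> 'a \<Rightarrow> 'a" where
  "Ff a b c k x = Tr3 q (x ^ (q + 1)) + (Mf a b c x) ^ (2 ^ k)"

lemma Tr_pow_q1: "Tr3 q (x ^ (q + 1)) = fr x * x + fr (fr x) * fr x + x * fr (fr x)"
  by (simp add: Tr_eq pow_q ac_simps)

lemma Tr_shift_id: "Tr3 q ((x + y) ^ (q + 1)) = Tr3 q (x ^ (q + 1)) + Tr3 q (y ^ (q + 1)) + Tr3 q (x * (fr y + fr (fr y)))"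
proof -
  have "Tr3 q (x * (fr y + fr (fr y))) = x * fr y + x * fr (fr y) + fr x * fr (fr y) + fr x * y + fr (fr x) * y + fr (fr x) * fr y"
    by (simp add: Tr_eq algebra_simps)
  then show ?thesis unfolding Tr_pow_q1 by (simp add: algebra_simps)
qed


lemma Ff_shift: "Ff a b c k (x + y) = Ff a b c k x + Ff a b c k y + Tr3 q (x * (fr y + fr (fr y)))"
  unfolding Ff_def Tr_shift_id Mf_add pow2_add by (simp add: ac_simps)

lemma Ff_Fq: "y \<in> Fq \<Longrightarrow> Ff a b c k y = y * y + ((a + b + c) * y) ^ (2 ^ k)"
proof -
  assume "y \<in> Fq"
  then have fy: "fr y = y" by (simp add: Fq_iff)
  have "Tr3 q (y ^ (q + 1)) = y * y"
    unfolding Tr_pow_q1 fy by simp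
  moreover have "Mf a b c y = (a + b + c) * y" using fy by (simp add: Mf_def algebra_simps)
  ultimately show ?thesis by (simp add: Ff_def)
qed


lemma Ff_notFq:
  assumes "y \<notin> Fq"
  shows "(\<exists>x. Ff a b c k (x + y) = Ff a b c k x) \<longleftrightarrow> Mf a b c y \<in> Fq"
proof -
  have w: "fr y + fr (fr y) \<noteq> 0"
  proof
    assume "fr y + fr (fr y) = 0"
    then have "fr y = fr (fr y)" by (simp add: add_eq_0_iff)
    then have "y = fr y" by simp
    then show False using assms by (simp add: Fq_iff)
  qed
  have "(\<exists>x. Ff a b c k (x + y) = Ff a b c k x) \<longleftrightarrow> (\<exists>x. Ff a b c k y = Tr3 q (x * (fr y + fr (fr y))))"
    unfolding Ff_shift by (simp add: add.assoc add_eq_0_iff)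
  also have "\<dots> \<longleftrightarrow> Ff a b c k y \<in> Fq"
  proof
    assume "\<exists>x. Ff a b c k y = Tr3 q (x * (fr y + fr (fr y)))"
    then obtain x where "Ff a b c k y = Tr3 q (x * (fr y + fr (fr y)))" by blast
    then show "Ff a b c k y \<in> Fq" using Fq_Tr by simp
  next
    assume "Ff a b c k y \<in> Fq"
    from Tr_mult_surj[OF w this] show "\<exists>x. Ff a b c k y = Tr3 q (x * (fr y + fr (fr y)))" by metis
  qed
  also have "\<dots> \<longleftrightarrow> (Mf a b c y) ^ (2 ^ k) \<in> Fq"
  proof -
    have e1: "Ff a b c k y = Tr3 q (y ^ (q + 1)) + (Mf a b c y) ^ (2 ^ k)" by (simp add: Ff_def)
    have e2: "(Mf a b c y) ^ (2 ^ k) = Tr3 q (y ^ (q + 1)) + Ff a b c k y"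
      unfolding e1 by (simp add: add.assoc[symmetric])
    show ?thesis
    proof
      assume "Ff a b c k y \<in> Fq" then show "(Mf a b c y) ^ (2 ^ k) \<in> Fq"
        unfolding e2 by (intro Fq_add Fq_Tr)
    next
      assume "(Mf a b c y) ^ (2 ^ k) \<in> Fq" then show "Ff a b c k y \<in> Fq"
        unfolding e1 by (intro Fq_add Fq_Tr)
    qed
  qed
  also have "\<dots> \<longleftrightarrow> Mf a b c y \<in> Fq" by (rule Fq_pow2_iff)
  finally show ?thesis .
qed

lemma Ff_inFq:
  assumes "y \<in> Fq"
  shows "(\<exists>x. Ff a b c k (x + y) = Ff a b c k x) \<longleftrightarrow> Ff a b c k y = 0"
proof -
  have "fr y + fr (fr y) = 0" using assms by (simp add: Fq_iff)
  then show ?thesis unfolding Ff_shift by (simp add: add.assoc char2 Tr_eq)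
qed

lemma inj_shift: "inj (h::'a \<Rightarrow> 'a) \<longleftrightarrow> (\<forall>y. y \<noteq> 0 \<longrightarrow> \<not> (\<exists>x. h (x + y) = h x))"
proof
  assume "inj h"
  then show "\<forall>y. y \<noteq> 0 \<longrightarrow> \<not> (\<exists>x. h (x + y) = h x)"
  proof (intro allI impI notI)
    fix y assume "y \<noteq> 0" "\<exists>x. h (x + y) = h x"
    then obtain x where "h (x + y) = h x" by blast
    with \<open>inj h\<close> have "x + y = x" by (rule injD)
    then show False using \<open>y \<noteq> 0\<close> by simp
  qed
next
  assume H: "\<forall>y. y \<noteq> 0 \<longrightarrow> \<not> (\<exists>x. h (x + y) = h x)"
  show "inj h"
  proof (rule injI)
    fix x z assume "h x = h z"
    then have "h (x + (x + z)) = h x" by (simp add: add.assoc[symmetric])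
    then have "x + z = 0" using H by blast
    then show "x = z" by (simp add: add_eq_0_iff)
  qed
qed

lemma PP_iff:
  "bij (Ff a b c k) \<longleftrightarrow>
    (\<forall>y\<in>Fq. y \<noteq> 0 \<longrightarrow> y * y + ((a + b + c) * y) ^ (2 ^ k) \<noteq> 0) \<and>
    (\<forall>y. y \<notin> Fq \<longrightarrow> Mf a b c y \<notin> Fq)"
proof -
  have "bij (Ff a b c k) \<longleftrightarrow> inj (Ff a b c k)"
    unfolding bij_def using finite_UNIV_inj_surj[of "Ff a b c k"] by (intro iffI conjI) simp_all
  also have "\<dots> \<longleftrightarrow> (\<forall>y. y \<noteq> 0 \<longrightarrow> \<not> (\<exists>x. Ff a b c k (x + y) = Ff a b c k x))"
    by (rule inj_shift)
  also have "\<dots> \<longleftrightarrow> (\<forall>y\<in>Fq. y \<noteq> 0 \<longrightarrow> y * y + ((a + b + c) * y) ^ (2 ^ k) \<noteq> 0) \<and>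
    (\<forall>y. y \<notin> Fq \<longrightarrow> Mf a b c y \<notin> Fq)" (is "?L \<longleftrightarrow> ?A \<and> ?B")
  proof (intro iffI conjI ballI allI impI)
    fix y assume H: ?L
    { assume y1: "y \<in> Fq" and y2: "y \<noteq> 0"
      have "\<not> (\<exists>x. Ff a b c k (x + y) = Ff a b c k x)" using H y2 by blast
      then have "Ff a b c k y \<noteq> 0" using Ff_inFq[OF y1, of a b c k] by blast
      then show "y * y + ((a + b + c) * y) ^ (2 ^ k) \<noteq> 0"
        using Ff_Fq[OF y1, of a b c k] by simp }
    { assume y1: "y \<notin> Fq"
      then have "y \<noteq> 0" by auto
      then have "\<not> (\<exists>x. Ff a b c k (x + y) = Ff a b c k x)" using H by blast
      then show "Mf a b c y \<notin> Fq" using Ff_notFq[OF y1, of a b c k] by blast }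
  next
    fix y :: 'a
    assume H: "?A \<and> ?B" and y: "y \<noteq> 0"
    show "\<not> (\<exists>x. Ff a b c k (x + y) = Ff a b c k x)"
    proof (cases "y \<in> Fq")
      case True
      then have "Ff a b c k y \<noteq> 0" using H y Ff_Fq[OF True, of a b c k] by simp
      then show ?thesis using Ff_inFq[OF True, of a b c k] by blast
    next
      case False
      then have "Mf a b c y \<notin> Fq" using H by blast
      then show ?thesis using Ff_notFq[OF False, of a b c k] by blast
    qed
  qed
  finally show ?thesis .
qed


lemma id5':
  fixes a0 a1 a2 b0 b1 b2 :: 'a
  shows "(a0+1)*(a1+1)*(a2+1) + (b0+1)*(b1+1)*(b2+1) + (a0+b0+1)*(a1+b1+1)*(a2+b2+1)
   - ((a0+1)*(b1+1)*(a2+b2+1) + (a1+1)*(b2+1)*(a0+b0+1) + (a2+1)*(b0+1)*(a1+b1+1))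
   = a1*a0 + a1*b0 + b1*b0 + a2*a1 + a2*b1 + b2*b1 + a0*a2 + a0*b2 + b0*b2"
proof -
  have "(a0+1)*(a1+1)*(a2+1) + (b0+1)*(b1+1)*(b2+1) + (a0+b0+1)*(a1+b1+1)*(a2+b2+1)
   - ((a0+1)*(b1+1)*(a2+b2+1) + (a1+1)*(b2+1)*(a0+b0+1) + (a2+1)*(b0+1)*(a1+b1+1))
   = (a1*a0 + a1*b0 + b1*b0 + a2*a1 + a2*b1 + b2*b1 + a0*a2 + a0*b2 + b0*b2)
     + 2 * (a0*a1*a2 + b0*b1*b2 - a0*b2 - a1*b0 - a2*b1)"
    by algebra
  then show ?thesis by (simp only: char2 mult_zero_left add_0_right)
qed

lemma Mf_Fq: "r \<in> Fq \<Longrightarrow> Mf a b c r = (a + b + c) * r"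
  by (simp add: Fq_iff Mf_def algebra_simps)

lemma B_Fq:
  assumes "a + b + c \<in> Fq" "a + b + c \<noteq> 0"
  shows "(\<forall>y. y \<notin> Fq \<longrightarrow> Mf a b c y \<notin> Fq) \<longleftrightarrow> DetS a b c \<noteq> 0"
proof -
  have "(\<forall>y. y \<notin> Fq \<longrightarrow> Mf a b c y \<notin> Fq) \<longleftrightarrow> (\<forall>y. Mf a b c y = 0 \<longrightarrow> y = 0)"
  proof (intro iffI allI impI)
    fix y assume H: "\<forall>y. y \<notin> Fq \<longrightarrow> Mf a b c y \<notin> Fq" and y: "Mf a b c y = 0"
    show "y = 0"
    proof (cases "y \<in> Fq")
      case True then show ?thesis using y assms(2) Mf_Fq[OF True, of a b c] by simp
    next
      case False then show ?thesis using H y by auto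
    qed
  next
    fix y assume H: "\<forall>y. Mf a b c y = 0 \<longrightarrow> y = 0" and y: "y \<notin> Fq"
    show "Mf a b c y \<notin> Fq"
    proof
      assume t: "Mf a b c y \<in> Fq"
      define r where "r = Mf a b c y / (a + b + c)"
      have rF: "r \<in> Fq" unfolding r_def divide_inverse using t assms(1) by (intro Fq_mult Fq_inverse)
      have "Mf a b c r = Mf a b c y" using Mf_Fq[OF rF, of a b c] assms(2) by (simp add: r_def)
      then have "Mf a b c (y + r) = 0" by (simp add: Mf_add)
      then have "y + r = 0" using H by blast
      then have "y = r" by (simp add: add_eq_0_iff)
      then show False using y rF by simp
    qed
  qed
  also have "\<dots> \<longleftrightarrow> DetS a b c \<noteq> 0" using ker_det[of a b c] by blast
  finally show ?thesis .
qed

lemma B_notFq: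
  assumes "a + b + c \<notin> Fq"
  shows "\<not> (\<forall>y. y \<notin> Fq \<longrightarrow> Mf a b c y \<notin> Fq)"
proof (cases "\<exists>y. y \<noteq> 0 \<and> Mf a b c y = 0")
  case True
  then obtain y where y: "y \<noteq> 0" "Mf a b c y = 0" by blast
  have "y \<notin> Fq"
  proof
    assume "y \<in> Fq"
    then have "(a + b + c) * y = 0" using Mf_Fq y by simp
    then show False using y assms by simp
  qed
  then show ?thesis using y by auto
next
  case False
  have "inj (Mf a b c)"
  proof (rule injI)
    fix x y assume "Mf a b c x = Mf a b c y"
    then have "Mf a b c (x + y) = 0" by (simp add: Mf_add)
    then show "x = y" using False add_eq_0_iff by blast
  qed
  then have "surj (Mf a b c)" by (simp add: finite_UNIV_inj_surj)
  then obtain y where y: "Mf a b c y = 1" by (metis surjD)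
  have "y \<notin> Fq"
  proof
    assume yF: "y \<in> Fq"
    then have "(a + b + c) * y = 1" using Mf_Fq y by simp
    then have "y * (a + b + c) = 1" by (simp add: mult.commute)
    then have "inverse y = a + b + c" by (rule inverse_unique)
    then have "a + b + c = inverse y" by simp
    then show False using assms Fq_inverse[OF yF] by simp
  qed
  then show ?thesis using y by auto
qed

lemma Mf_plus1: "Mf (a + 1) (b + 1) (c + 1) y = Mf a b c y + Tr3 q y"
  by (simp add: Mf_def Tr_eq algebra_simps)

lemma Tr_Fq: "y \<in> Fq \<Longrightarrow> Tr3 q y = y"
  by (simp add: Fq_iff Tr_eq)

lemma B_zero:
  assumes "a + b + c = 0"
  shows "(\<forall>y. y \<notin> Fq \<longrightarrow> Mf a b c y \<notin> Fq) \<longleftrightarrow> DetS (a + 1) (b + 1) (c + 1) \<noteq> 0"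
proof -
  have "(\<forall>y. y \<notin> Fq \<longrightarrow> Mf a b c y \<notin> Fq) \<longleftrightarrow> (\<forall>y. Mf (a + 1) (b + 1) (c + 1) y = 0 \<longrightarrow> y = 0)"
  proof (intro iffI allI impI)
    fix y assume H: "\<forall>y. y \<notin> Fq \<longrightarrow> Mf a b c y \<notin> Fq" and y: "Mf (a + 1) (b + 1) (c + 1) y = 0"
    then have e: "Mf a b c y = Tr3 q y" by (simp add: Mf_plus1 add_eq_0_iff)
    then have "y \<in> Fq" using H Fq_Tr by metis
    then have "Mf a b c y = 0" using Mf_Fq assms by simp
    then show "y = 0" using e Tr_Fq[OF \<open>y \<in> Fq\<close>] by simp
  next
    fix y assume H: "\<forall>y. Mf (a + 1) (b + 1) (c + 1) y = 0 \<longrightarrow> y = 0" and y: "y \<notin> Fq"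
    show "Mf a b c y \<notin> Fq"
    proof
      assume t: "Mf a b c y \<in> Fq"
      define r where "r = Mf a b c y + Tr3 q y"
      have rF: "r \<in> Fq" unfolding r_def using t by (intro Fq_add Fq_Tr)
      have "Mf (a + 1) (b + 1) (c + 1) r = r"
        unfolding Mf_plus1 using Mf_Fq[OF rF, of a b c] assms Tr_Fq[OF rF] by simp
      also have "\<dots> = Mf (a + 1) (b + 1) (c + 1) y" by (simp add: r_def Mf_plus1)
      finally have "Mf (a + 1) (b + 1) (c + 1) (y + r) = 0" by (simp add: Mf_add)
      then have "y + r = 0" using H by blast
      then have "y = r" by (simp add: add_eq_0_iff)
      then show False using y rF by simp
    qed
  qed
  also have "\<dots> \<longleftrightarrow> DetS (a + 1) (b + 1) (c + 1) \<noteq> 0" using ker_det[of "a + 1" "b + 1" "c + 1"] by blast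
  finally show ?thesis .
qed

lemma Det_zero_case:
  assumes "a + b + c = 0"
  shows "DetS (a + 1) (b + 1) (c + 1) = Tr3 q (a ^ (q + 1) + a ^ q * b + b ^ (q + 1))"
proof -
  have c: "c = a + b" using assms by (simp add: add_eq_0_iff)
  have "DetS (a + 1) (b + 1) (c + 1) =
    (a+1)*(fr a+1)*(fr (fr a)+1) + (b+1)*(fr b+1)*(fr (fr b)+1) + (a+b+1)*(fr a+fr b+1)*(fr (fr a)+fr (fr b)+1)
   - ((a+1)*(fr b+1)*(fr (fr a)+fr (fr b)+1) + (fr a+1)*(fr (fr b)+1)*(a+b+1) + (fr (fr a)+1)*(b+1)*(fr a+fr b+1))"
    unfolding c DetS_def by (simp only: fr_add fr_1)
  also have "\<dots> = fr a*a + fr a*b + fr b*b + fr (fr a)*fr a + fr (fr a)*fr b + fr (fr b)*fr b + a*fr (fr a) + a*fr (fr b) + b*fr (fr b)"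
    by (rule id5')
  also have "\<dots> = Tr3 q (a ^ (q + 1) + a ^ q * b + b ^ (q + 1))"
    by (simp add: Tr_eq pow_q ac_simps)
  finally show ?thesis .
qed

lemma Det_expr: "DetS a b c = a ^ (q^2 + q + 1) + b ^ (q^2 + q + 1) + c ^ (q^2 + q + 1) + Tr3 q (a * b ^ q * c ^ (q^2))"
  unfolding DetS_def norm_eq Tr_eq pow_q pow_q2 by (simp add: ac_simps)

end

context ff begin

definition G :: "'a set" where "G = {y \<in> Fq. y \<noteq> 0}"

lemma card_G: "card G = q - 1"
proof -
  have "G = Fq - {0}" by (auto simp: G_def)
  then show ?thesis using card_Fq by (simp add: card_Diff_singleton)
qed

lemma G_pow: assumes "y \<in> G" shows "y ^ (q - 1) = 1"
proof -
  have y: "y ^ q = y" "y \<noteq> 0" using assms by (simp_all add: G_def Fq_iff fr_def)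
  have "y ^ q = y * y ^ (q - 1)" using q2 by (metis Suc_diff_1 less_le_trans pos2 power_Suc)
  then show ?thesis using y by simp
qed

lemma G_mult: "y \<in> G \<Longrightarrow> z \<in> G \<Longrightarrow> y * z \<in> G"
  by (simp add: G_def Fq_mult)
lemma G_pow_cl: "y \<in> G \<Longrightarrow> y ^ n \<in> G"
  by (simp add: G_def Fq_pow)
lemma G_inverse: "y \<in> G \<Longrightarrow> inverse y \<in> G"
  by (simp add: G_def Fq_inverse)

lemma card_K: assumes "1 \<le> t" shows "card {y \<in> G. y ^ t = 1} \<le> t"
proof -
  define p where "p = monom (1::'a) t - 1"
  have "coeff p t = 1" using assms by (simp add: p_def coeff_monom)
  then have p0: "p \<noteq> 0" by (metis coeff_0 one_neq_zero)
  have dp: "degree p \<le> t" unfolding p_def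
    by (intro order.trans[OF degree_diff_le_max]) (auto simp: degree_monom_le)
  have "poly p x = 0" if "x \<in> {y \<in> G. y ^ t = 1}" for x
    using that by (simp add: p_def poly_monom)
  then show ?thesis by (rule roots_bound[OF p0 dp])
qed

lemma mult_card: "card G = card ((\<lambda>y. y ^ r) ` G) * card {y \<in> G. y ^ r = 1}"
proof (rule card_fibers)
  show "finite G" by simp
  fix v assume "v \<in> (\<lambda>y. y ^ r) ` G"
  then obtain z0 where z0: "z0 \<in> G" "v = z0 ^ r" by auto
  have nz: "z0 \<noteq> 0" using z0 by (simp add: G_def)
  have "{x \<in> G. x ^ r = v} = (\<lambda>u. z0 * u) ` {y \<in> G. y ^ r = 1}"
  proof (rule set_eqI, rule iffI)
    fix x assume x: "x \<in> {x \<in> G. x ^ r = v}"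
    then have xG: "x \<in> G" and xv: "x ^ r = z0 ^ r" using z0 by auto
    have "x / z0 \<in> G" unfolding divide_inverse using xG z0 by (intro G_mult G_inverse)
    moreover have "(x / z0) ^ r = 1" using xv nz by (simp add: power_divide)
    moreover have "x = z0 * (x / z0)" using nz by simp
    ultimately show "x \<in> (\<lambda>u. z0 * u) ` {y \<in> G. y ^ r = 1}" by blast
  next
    fix x assume "x \<in> (\<lambda>u. z0 * u) ` {y \<in> G. y ^ r = 1}"
    then obtain u where "u \<in> G" "u ^ r = 1" "x = z0 * u" by auto
    then show "x \<in> {x \<in> G. x ^ r = v}" using z0 G_mult by (simp add: power_mult_distrib)
  qed
  also have "card \<dots> = card {y \<in> G. y ^ r = 1}"
    using nz by (intro card_image) (simp add: inj_on_def)
  finally show "card {x \<in> G. x ^ r = v} = card {y \<in> G. y ^ r = 1}" .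
qed

lemma K_gcd:
  assumes "y \<in> G" shows "y ^ r = 1 \<longleftrightarrow> y ^ gcd r (q - 1) = 1"
proof
  assume h: "y ^ r = 1"
  show "y ^ gcd r (q - 1) = 1"
  proof (cases "r = 0")
    case True then show ?thesis using G_pow[OF assms] by simp
  next
    case False
    then obtain u v where uv: "r * u = (q - 1) * v + gcd r (q - 1)" using bezout_nat by blast
    have "1 = (y ^ r) ^ u" using h by simp
    also have "\<dots> = ((y ^ (q - 1)) ^ v) * y ^ gcd r (q - 1)"
      by (simp add: power_mult[symmetric] power_add[symmetric] uv)
    finally show ?thesis using G_pow[OF assms] by simp
  qed
next
  assume h: "y ^ gcd r (q - 1) = 1"
  obtain t where "r = gcd r (q - 1) * t" by (metis dvdE gcd_dvd1)
  then have "y ^ r = (y ^ gcd r (q - 1)) ^ t" by (metis power_mult)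
  then show "y ^ r = 1" using h by simp
qed

lemma image_pow:
  "(\<lambda>y. y ^ r) ` G = {z \<in> G. z ^ ((q - 1) div gcd r (q - 1)) = 1}"
proof -
  define n where "n = q - 1"
  define g where "g = gcd r n"
  have n1: "1 \<le> n" using q2 by (simp add: n_def)
  have g1: "1 \<le> g" using n1 by (simp add: g_def Suc_le_eq)
  have gn: "g dvd n" "g dvd r" by (simp_all add: g_def)
  have ng: "n = g * (n div g)" using gn by simp
  have ng1: "1 \<le> n div g" using n1 g1 gn
    by (metis dvd_div_eq_0_iff less_one not_less nat_neq_iff n1 not_one_le_zero)
  have Keq: "{y \<in> G. y ^ r = 1} = {y \<in> G. y ^ g = 1}"
    using K_gcd by (auto simp: g_def n_def)
  have "n = card ((\<lambda>y. y ^ r) ` G) * card {y \<in> G. y ^ g = 1}"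
    using mult_card[of r] card_G Keq by (simp add: n_def)
  also have "\<dots> \<le> card ((\<lambda>y. y ^ r) ` G) * g" using card_K[OF g1] by simp
  finally have "g * (n div g) \<le> g * card ((\<lambda>y. y ^ r) ` G)" using ng by (simp add: mult.commute)
  then have lb: "n div g \<le> card ((\<lambda>y. y ^ r) ` G)" using g1 by simp
  have sub: "(\<lambda>y. y ^ r) ` G \<subseteq> {z \<in> G. z ^ (n div g) = 1}"
  proof
    fix z assume "z \<in> (\<lambda>y. y ^ r) ` G"
    then obtain y where y: "y \<in> G" "z = y ^ r" by auto
    obtain r' where r': "r = g * r'" using gn by (metis dvdE)
    have "z ^ (n div g) = (y ^ n) ^ r'"
      using y r' ng by (simp add: power_mult[symmetric]) (metis mult.assoc mult.commute)
    then have "z ^ (n div g) = 1" using G_pow[OF y(1)] by (simp add: n_def)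
    then show "z \<in> {z \<in> G. z ^ (n div g) = 1}" using y G_pow_cl by simp
  qed
  have "card {z \<in> G. z ^ (n div g) = 1} \<le> n div g" using card_K[OF ng1] .
  with lb have eq: "card ((\<lambda>y. y ^ r) ` G) = card {z \<in> G. z ^ (n div g) = 1}"
    using card_mono[OF _ sub] by simp
  have "(\<lambda>y. y ^ r) ` G = {z \<in> G. z ^ (n div g) = 1}"
    by (rule card_subset_eq[OF _ sub eq]) simp
  then show ?thesis by (simp add: n_def g_def)
qed


lemma A_iff:
  assumes d: "d \<in> Fq" "d \<noteq> 0"
  shows "(\<forall>y\<in>Fq. y \<noteq> 0 \<longrightarrow> y * y + (d * y) ^ (2 ^ k) \<noteq> 0) \<longleftrightarrow>
         d ^ ((q - 1) div (2 ^ nat (gcd (int k - 1) (int m)) - 1)) \<noteq> 1"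
proof (cases k)
  case 0
  have "nat (gcd (int k - 1) (int m)) = 1" using 0 by simp
  then have e: "d ^ ((q - 1) div (2 ^ nat (gcd (int k - 1) (int m)) - 1)) = 1"
    using G_pow[of d] d by (simp add: G_def)
  have "d * d + (d * d) ^ (2 ^ k) = 0" using 0 by simp
  then show ?thesis using e d by blast
next
  case (Suc j)
  define r where "r = (2::nat) ^ j - 1"
  define D where "D = d ^ (2 ^ j)"
  have dG: "d \<in> G" using d by (simp add: G_def)
  have DG: "D \<in> G" unfolding D_def using dG by (rule G_pow_cl)
  have D0: "D \<noteq> 0" using DG by (simp add: G_def)
  have sj: "nat (gcd (int k - 1) (int m)) = gcd j m"
    using Suc by (simp add: gcd_int_int_eq)
  have gg: "2 ^ nat (gcd (int k - 1) (int m)) - 1 = gcd r (q - 1)"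
    unfolding sj r_def qm using gcd_pow2_minus1[of j m] by simp
  have rj: "(2::nat) ^ j = Suc r" by (simp add: r_def)
  have step: "y * y + (d * y) ^ (2 ^ k) = 0 \<longleftrightarrow> y ^ r = inverse D" if yG: "y \<in> G" for y
  proof -
    have y0: "y \<noteq> 0" using yG by (simp add: G_def)
    have "(d * y) ^ (2 ^ k) = ((d * y) ^ (2 ^ j)) ^ (2 ^ 1)"
      using Suc by (simp add: power_mult[symmetric] mult.commute)
    moreover have "y * y = y ^ (2 ^ 1)" by (simp add: power2_eq_square)
    ultimately have "y * y + (d * y) ^ (2 ^ k) = 0 \<longleftrightarrow> y = (d * y) ^ (2 ^ j)"
      using pow2_inj[of y 1 "(d * y) ^ (2 ^ j)"] by (simp add: add_eq_0_iff)
    also have "(d * y) ^ (2 ^ j) = D * y * y ^ r"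
      by (simp add: D_def power_mult_distrib rj)
    also have "y = D * y * y ^ r \<longleftrightarrow> y ^ r = inverse D"
      using y0 D0 by (auto simp: field_simps)
    finally show ?thesis .
  qed
  have "(\<exists>y\<in>G. y * y + (d * y) ^ (2 ^ k) = 0) \<longleftrightarrow> (\<exists>y\<in>G. y ^ r = inverse D)"
    using step by blast
  also have "\<dots> \<longleftrightarrow> inverse D \<in> (\<lambda>y. y ^ r) ` G" by (auto simp: image_iff eq_commute)
  also have "\<dots> \<longleftrightarrow> (inverse D) ^ ((q - 1) div gcd r (q - 1)) = 1"
    unfolding image_pow using G_inverse[OF DG] by simp
  also have "\<dots> \<longleftrightarrow> (d ^ ((q - 1) div gcd r (q - 1))) ^ (2 ^ j) = 1 ^ (2 ^ j)"
    by (simp add: D_def power_inverse power_mult[symmetric] mult.commute)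
  also have "\<dots> \<longleftrightarrow> d ^ ((q - 1) div gcd r (q - 1)) = 1" by (rule pow2_inj)
  finally show ?thesis unfolding gg by (auto simp: G_def)
qed

end

theorem mainTheorem5:
  fixes a b c :: "'a::{field,finite}" and m k :: nat
  assumes m: "m \<ge> 1"
    and card: "card (UNIV :: 'a set) = 2 ^ (3 * m)"
    and k: "k < m"
  defines "q \<equiv> (2::nat) ^ m"
  defines "s \<equiv> nat (gcd (int k - 1) (int m))"
  defines "L \<equiv> (\<lambda>x::'a. (a * x + b * x ^ q + c * x ^ (q ^ 2)) ^ (2 ^ k))"
  shows "is_perm (\<lambda>x. Tr3 q (x ^ (q + 1)) + L x) \<longleftrightarrow>
     ((a + b + c) ^ ((q - 1) div (2 ^ s - 1)) \<noteq> 1 \<and>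
      ((((a + b + c) ^ q = a + b + c \<and> a + b + c \<noteq> 0) \<and>
        a ^ (q^2 + q + 1) + b ^ (q^2 + q + 1) + c ^ (q^2 + q + 1)
          + Tr3 q (a * b ^ q * c ^ (q^2)) \<noteq> 0)
       \<or> (a + b + c = 0 \<and> Tr3 q (a ^ (q + 1) + a ^ q * b + b ^ (q + 1)) \<noteq> 0)))"
proof -
  interpret F: ff q m "frob q :: 'a \<Rightarrow> 'a"
    using m by unfold_locales (simp_all add: card q_def power_mult[symmetric] mult.commute frob_def)
  have Fq_iff': "x \<in> F.Fq \<longleftrightarrow> x ^ q = x" for x by (simp add: F.Fq_iff frob_def)
  have fun_eq: "(\<lambda>x. Tr3 q (x ^ (q + 1)) + L x) = F.Ff a b c k"
    by (rule ext) (simp add: F.Ff_def F.Mf_def L_def power_mult[symmetric] power2_eq_square frob_def)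
  define d where "d = a + b + c"
  define e where "e = (q - 1) div (2 ^ s - 1)"
  define A where "A = (\<forall>y\<in>F.Fq. y \<noteq> 0 \<longrightarrow> y * y + ((a + b + c) * y) ^ (2 ^ k) \<noteq> 0)"
  define B where "B = (\<forall>y. y \<notin> F.Fq \<longrightarrow> F.Mf a b c y \<notin> F.Fq)"
  have lhs: "is_perm (\<lambda>x. Tr3 q (x ^ (q + 1)) + L x) \<longleftrightarrow> A \<and> B"
    unfolding is_perm_def fun_eq A_def B_def by (rule F.PP_iff)
  have s1: "1 \<le> s" "s \<le> m"
  proof -
    have gpos: "0 < gcd (int k - 1) (int m)" using m by simp
    have "gcd (int k - 1) (int m) \<le> int m" using m by (intro zdvd_imp_le) auto
    moreover have "\<And>g::int. 0 < g \<Longrightarrow> g \<le> int m \<Longrightarrow> 1 \<le> nat g \<and> nat g \<le> m" by linarith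
    ultimately show "1 \<le> s" "s \<le> m" using gpos unfolding s_def by blast+
  qed
  have e1: "e \<noteq> 0"
  proof -
    have p1: "(2::nat) ^ s \<le> 2 ^ m" by (rule power_increasing) (use s1 in auto)
    have p2: "(2::nat) ^ s - 1 \<le> 2 ^ m - 1" using p1 by (rule diff_le_mono)
    have "(2::nat) ^ 1 \<le> 2 ^ s" by (rule power_increasing) (use s1 in auto)
    then have p3: "0 < (2::nat) ^ s - 1" by simp
    show ?thesis unfolding e_def q_def using div_eq_0_iff[of "2 ^ m - 1" "2 ^ s - 1"] p2 p3 by linarith
  qed
  consider "d = 0" | "d \<noteq> 0" "d \<in> F.Fq" | "d \<notin> F.Fq" by blast
  then show ?thesis
  proof cases
    case 1
    have A: A using 1 by (simp add: A_def d_def zero_power)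
    have B: "B \<longleftrightarrow> Tr3 q (a ^ (q + 1) + a ^ q * b + b ^ (q + 1)) \<noteq> 0"
      using F.B_zero[of a b c] F.Det_zero_case[of a b c] 1 unfolding B_def d_def by simp
    have "d ^ e \<noteq> 1" using 1 e1 by (simp add: zero_power)
    then show ?thesis using lhs A B 1 unfolding d_def e_def by blast
  next
    case 2
    have A: "A \<longleftrightarrow> d ^ e \<noteq> 1"
      using F.A_iff[OF 2(2,1), of k] unfolding A_def d_def e_def s_def by simp
    have B: "B \<longleftrightarrow> a ^ (q^2 + q + 1) + b ^ (q^2 + q + 1) + c ^ (q^2 + q + 1)
          + Tr3 q (a * b ^ q * c ^ (q^2)) \<noteq> 0"
      using F.B_Fq[of a b c] F.Det_expr[of a b c] 2 unfolding B_def d_def by simp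
    have dq: "d ^ q = d" using 2 Fq_iff' by blast
    show ?thesis using lhs A B 2(1) dq unfolding d_def e_def by blast
  next
    case 3
    have B: "\<not> B" using F.B_notFq[of a b c] 3 unfolding B_def d_def by blast
    have "d ^ q \<noteq> d" using 3 Fq_iff' by blast
    moreover have "d \<noteq> 0" using 3 F.Fq_0 by blast
    ultimately show ?thesis using lhs B unfolding d_def by blast
  qed
qed

end
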